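(* Let $n$ be a positive integer, let $\mathcal F$ be an $\mathcal N$-saturated family of subsets of $[n]$, and let $A_1,\dots,A_k$ and $B_1,\dots,B_l$ be elements of $\mathcal F$, where $k,l\ge 1$. If $\bigcap_{i=1}^k A_i\notin\mathcal F$, then in every induced copy of $\mathcal N$ in $\mathcal F\cup\{\bigcap_{i=1}^k A_i\}$ that contains $\bigcap_{i=1}^k A_i$, this set is a minimal element of the copy; moreover there is such an induced copy in which $\bigcap_{i=1}^k A_i$ is the minimal element that is comparable to both maximal elements. Similarly, if $\bigcup_{i=1}^l B_i\notin\mathcal F$, then in every induced copy of $\mathcal N$ in $\mathcal F\cup\{\bigcup_{i=1}^l B_i\}$ containing $\bigcup_{i=1}^l B_i$, this set is a maximal element of the copy; moreover there is such an induced copy in which $\bigcup_{i=1}^l B_i$ is the maximal element that is comparable to both minimal elements.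
   Context: The poset $\mathcal N$ has four elements $a,b,c,d$ with $a<c$, $b<c$, $b<d$ and no other comparabilities (so $a,b$ are its minimal elements, $c,d$ its maximal elements; $c$ is the unique maximal element comparable to both minimal elements and $b$ the unique minimal element comparable to both maximal elements). A family $\mathcal Q$ of sets (ordered by inclusion) contains an induced copy of $\mathcal N$ if there are distinct sets in $\mathcal Q$ whose inclusion relations are exactly those of $a,b,c,d$ above. A family $\mathcal F$ of subsets of $[n]=\{1,\dots,n\}$ is $\mathcal N$-saturated if $\mathcal F$ contains no induced copy of $\mathcal N$, but for every $S\subseteq[n]$ with $S\notin\mathcal F$, the family $\mathcal F\cup\{S\}$ contains an induced copy of $\mathcal N$. *)

theory Defs
  imports Main
begin

text \<open>An induced copy of the poset N in a family Q, given by the tuple (a,b,c,d):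
  a, b minimal; c, d maximal; a < c, b < c, b < d, and no other comparabilities.\<close>
definition induced_N :: "'a set set \<Rightarrow> 'a set \<Rightarrow> 'a set \<Rightarrow> 'a set \<Rightarrow> 'a set \<Rightarrow> bool" where
  "induced_N Q a b c d \<longleftrightarrow>
     a \<in> Q \<and> b \<in> Q \<and> c \<in> Q \<and> d \<in> Q \<and>
     distinct [a, b, c, d] \<and>
     a \<subset> c \<and> b \<subset> c \<and> b \<subset> d \<and>
     \<not> a \<subseteq> b \<and> \<not> b \<subseteq> a \<and>
     \<not> a \<subseteq> d \<and> \<not> d \<subseteq> a \<and>
     \<not> c \<subseteq> d \<and> \<not> d \<subseteq> c"

definition contains_induced_N :: "'a set set \<Rightarrow> bool" where
  "contains_induced_N Q \<longleftrightarrow> (\<exists>a b c d. induced_N Q a b c d)"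

definition N_saturated :: "nat \<Rightarrow> nat set set \<Rightarrow> bool" where
  "N_saturated n F \<longleftrightarrow>
     F \<subseteq> Pow {1..n} \<and> \<not> contains_induced_N F \<and>
     (\<forall>S. S \<subseteq> {1..n} \<and> S \<notin> F \<longrightarrow> contains_induced_N (insert S F))"

end

theory Submission
  imports Defs
begin

lemma inter_part:
  assumes noN: "\<not> contains_induced_N F" and sat: "contains_induced_N (insert X F)"
    and XF: "X \<notin> F" and SF: "S \<subseteq> F" and Sne: "S \<noteq> {}" and Xdef: "X = \<Inter>S"
  shows "(\<forall>a b c d. induced_N (insert X F) a b c d \<and> X \<in> {a,b,c,d} \<longrightarrow> X = a \<or> X = b)
       \<and> (\<exists>a c d. induced_N (insert X F) a X c d)"
proof -
  have noF: "\<not> induced_N F a b c d" for a b c d using noN unfolding contains_induced_N_def by blast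
  have XT: "X \<subseteq> T" if "T \<in> S" for T using that Xdef by blast
  have TF: "T \<in> F" if "T \<in> S" for T using that SF by blast
  have TX: "T \<noteq> X" if "T \<in> S" for T using TF[OF that] XF by blast
  have P1: "X = a \<or> X = b" if N: "induced_N (insert X F) a b c d" and XN: "X \<in> {a,b,c,d}" for a b c d
  proof (rule ccontr)
    assume nab: "\<not> (X = a \<or> X = b)"
    then have "X = c \<or> X = d" using XN by blast
    then show False
    proof
      assume Xc: "X = c"
      have "\<not> d \<subseteq> X" using N Xc unfolding induced_N_def by blast
      then obtain T where T: "T \<in> S" "\<not> d \<subseteq> T" using Xdef by blast
      have "\<not> T \<subseteq> d"
      proof
        assume "T \<subseteq> d"
        then have "a \<subseteq> d" using N Xc XT[OF T(1)] unfolding induced_N_def by blast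
        then show False using N unfolding induced_N_def by blast
      qed
      have "induced_N F a b T d"
        using N Xc XT[OF T(1)] TF[OF T(1)] T(2) \<open>\<not> T \<subseteq> d\<close> unfolding induced_N_def by auto
      then show False using noF by blast
    next
      assume Xd: "X = d"
      have "\<not> a \<subseteq> X" using N Xd unfolding induced_N_def by blast
      then obtain T where T: "T \<in> S" "\<not> a \<subseteq> T" using Xdef by blast
      have "induced_N F a b c T"
        using N Xd XT[OF T(1)] TF[OF T(1)] T(2) unfolding induced_N_def by auto
      then show False using noF by blast
    qed
  qed
  obtain a b c d where N: "induced_N (insert X F) a b c d" using sat unfolding contains_induced_N_def by blast
  have XN: "X \<in> {a,b,c,d}"
  proof (rule ccontr)
    assume "X \<notin> {a,b,c,d}"
    then have "induced_N F a b c d" using N unfolding induced_N_def by auto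
    then show False using noF by blast
  qed
  have P2: "\<exists>a c d. induced_N (insert X F) a X c d"
  proof (cases "X = b")
    case True then show ?thesis using N by blast
  next
    case False
    then have Xa: "X = a" using P1[OF N XN] by blast
    have "\<not> b \<subseteq> X" using N Xa unfolding induced_N_def by blast
    then obtain T where T: "T \<in> S" "\<not> b \<subseteq> T" using Xdef by blast
    show ?thesis
    proof (cases "T \<subseteq> c")
      case False
      have "induced_N (insert X F) b X c T"
        using N Xa XT[OF T(1)] TF[OF T(1)] TX[OF T(1)] T(2) False unfolding induced_N_def by auto
      then show ?thesis by blast
    next
      case True
      have "\<not> T \<subseteq> d"
      proof
        assume "T \<subseteq> d"
        then have "a \<subseteq> d" using N Xa XT[OF T(1)] by blast
        then show False using N unfolding induced_N_def by blast
      qed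
      have "induced_N F T b c d"
        using N Xa XT[OF T(1)] TF[OF T(1)] T(2) True \<open>\<not> T \<subseteq> d\<close> unfolding induced_N_def by auto
      then show ?thesis using noF by blast
    qed
  qed
  show ?thesis using P1 P2 by blast
qed


lemma union_part:
  assumes noN: "\<not> contains_induced_N F" and sat: "contains_induced_N (insert Y F)"
    and YF: "Y \<notin> F" and SF: "S \<subseteq> F" and Sne: "S \<noteq> {}" and Ydef: "Y = \<Union>S"
  shows "(\<forall>a b c d. induced_N (insert Y F) a b c d \<and> Y \<in> {a,b,c,d} \<longrightarrow> Y = c \<or> Y = d)
       \<and> (\<exists>a b d. induced_N (insert Y F) a b Y d)"
proof -
  have noF: "\<not> induced_N F a b c d" for a b c d using noN unfolding contains_induced_N_def by blast
  have TY: "T \<subseteq> Y" if "T \<in> S" for T using that Ydef by blast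
  have TF: "T \<in> F" if "T \<in> S" for T using that SF by blast
  have TX: "T \<noteq> Y" if "T \<in> S" for T using TF[OF that] YF by blast
  have P1: "Y = c \<or> Y = d" if N: "induced_N (insert Y F) a b c d" and YN: "Y \<in> {a,b,c,d}" for a b c d
  proof (rule ccontr)
    assume nab: "\<not> (Y = c \<or> Y = d)"
    then have "Y = a \<or> Y = b" using YN by blast
    then show False
    proof
      assume Ya: "Y = a"
      have "\<not> Y \<subseteq> d" using N Ya unfolding induced_N_def by blast
      then obtain T where T: "T \<in> S" "\<not> T \<subseteq> d" using Ydef by blast
      have "induced_N F T b c d"
        using N Ya TY[OF T(1)] TF[OF T(1)] T(2) unfolding induced_N_def by auto
      then show False using noF by blast
    next
      assume Yb: "Y = b"
      have "\<not> Y \<subseteq> a" using N Yb unfolding induced_N_def by blast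
      then obtain T where T: "T \<in> S" "\<not> T \<subseteq> a" using Ydef by blast
      have "induced_N F a T c d"
        using N Yb TY[OF T(1)] TF[OF T(1)] T(2) unfolding induced_N_def by auto
      then show False using noF by blast
    qed
  qed
  obtain a b c d where N: "induced_N (insert Y F) a b c d" using sat unfolding contains_induced_N_def by blast
  have YN: "Y \<in> {a,b,c,d}"
  proof (rule ccontr)
    assume "Y \<notin> {a,b,c,d}"
    then have "induced_N F a b c d" using N unfolding induced_N_def by auto
    then show False using noF by blast
  qed
  have P2: "\<exists>a b d. induced_N (insert Y F) a b Y d"
  proof (cases "Y = c")
    case True then show ?thesis using N by blast
  next
    case False
    then have Yd: "Y = d" using P1[OF N YN] by blast
    have "\<not> Y \<subseteq> c" using N Yd unfolding induced_N_def by blast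
    then obtain T where T: "T \<in> S" "\<not> T \<subseteq> c" using Ydef by blast
    show ?thesis
    proof (cases "b \<subseteq> T")
      case False
      have "induced_N (insert Y F) T b Y c"
        using N Yd TY[OF T(1)] TF[OF T(1)] TX[OF T(1)] T(2) False unfolding induced_N_def by auto
      then show ?thesis by blast
    next
      case True
      have "induced_N F a b c T"
        using N Yd TY[OF T(1)] TF[OF T(1)] T(2) True unfolding induced_N_def by auto
      then show ?thesis using noF by blast
    qed
  qed
  show ?thesis using P1 P2 by blast
qed

theorem lemma2p2:
  fixes n k l :: nat and F :: "nat set set" and A B :: "nat \<Rightarrow> nat set"
  assumes "n \<ge> 1" and "N_saturated n F"
    and "k \<ge> 1" and "l \<ge> 1"
    and "\<forall>i\<in>{1..k}. A i \<in> F" and "\<forall>i\<in>{1..l}. B i \<in> F"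
  shows "((\<Inter>i\<in>{1..k}. A i) \<notin> F \<longrightarrow>
            (\<forall>a b c d. induced_N (insert (\<Inter>i\<in>{1..k}. A i) F) a b c d \<and>
                 (\<Inter>i\<in>{1..k}. A i) \<in> {a, b, c, d}
               \<longrightarrow> (\<Inter>i\<in>{1..k}. A i) = a \<or> (\<Inter>i\<in>{1..k}. A i) = b) \<and>
            (\<exists>a c d. induced_N (insert (\<Inter>i\<in>{1..k}. A i) F) a (\<Inter>i\<in>{1..k}. A i) c d))
       \<and> ((\<Union>i\<in>{1..l}. B i) \<notin> F \<longrightarrow>
            (\<forall>a b c d. induced_N (insert (\<Union>i\<in>{1..l}. B i) F) a b c d \<and>
                 (\<Union>i\<in>{1..l}. B i) \<in> {a, b, c, d}
               \<longrightarrow> (\<Union>i\<in>{1..l}. B i) = c \<or> (\<Union>i\<in>{1..l}. B i) = d) \<and>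
            (\<exists>a b d. induced_N (insert (\<Union>i\<in>{1..l}. B i) F) a b (\<Union>i\<in>{1..l}. B i) d))"
  proof -
  have sat: "F \<subseteq> Pow {1..n}" "\<not> contains_induced_N F"
    "\<And>S. S \<subseteq> {1..n} \<Longrightarrow> S \<notin> F \<Longrightarrow> contains_induced_N (insert S F)"
    using assms(2) unfolding N_saturated_def by blast+
  have SA: "A ` {1..k} \<subseteq> F" "A ` {1..k} \<noteq> {}" using assms(3,5) by auto
  have SB: "B ` {1..l} \<subseteq> F" "B ` {1..l} \<noteq> {}" using assms(4,6) by auto
  have subA: "(\<Inter>i\<in>{1..k}. A i) \<subseteq> {1..n}" using SA sat(1) by blast
  have subB: "(\<Union>i\<in>{1..l}. B i) \<subseteq> {1..n}" using SB sat(1) by blast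
  show ?thesis
  proof (rule conjI; intro impI)
    assume h: "(\<Inter>i\<in>{1..k}. A i) \<notin> F"
    show "(\<forall>a b c d. induced_N (insert (\<Inter>i\<in>{1..k}. A i) F) a b c d \<and>
                 (\<Inter>i\<in>{1..k}. A i) \<in> {a, b, c, d}
               \<longrightarrow> (\<Inter>i\<in>{1..k}. A i) = a \<or> (\<Inter>i\<in>{1..k}. A i) = b) \<and>
            (\<exists>a c d. induced_N (insert (\<Inter>i\<in>{1..k}. A i) F) a (\<Inter>i\<in>{1..k}. A i) c d)"
      by (rule inter_part[OF sat(2) sat(3)[OF subA h] h SA refl])
  next
    assume h: "(\<Union>i\<in>{1..l}. B i) \<notin> F"
    show "(\<forall>a b c d. induced_N (insert (\<Union>i\<in>{1..l}. B i) F) a b c d \<and>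
                 (\<Union>i\<in>{1..l}. B i) \<in> {a, b, c, d}
               \<longrightarrow> (\<Union>i\<in>{1..l}. B i) = c \<or> (\<Union>i\<in>{1..l}. B i) = d) \<and>
            (\<exists>a b d. induced_N (insert (\<Union>i\<in>{1..l}. B i) F) a b (\<Union>i\<in>{1..l}. B i) d)"
      by (rule union_part[OF sat(2) sat(3)[OF subB h] h SB refl])
  qed
qed

end
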